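(* For the stochastic energy exchange model of the context and a time step $h>0$, the time-$h$ sampling chain $\mathbf{E}_n=\mathbf{E}_{nh}$ is $\lambda$-irreducible, where $\lambda$ is Lebesgue measure on $\mathbb{R}^N_+$: for every measurable $A\subset\mathbb{R}^N_+$ with $\lambda(A)>0$ and every $\mathbf{E}_0\in\mathbb{R}^N_+$ there is $n\ge1$ with $P^{nh}(\mathbf{E}_0,A)>0$.
   Context: Fix $N\ge1$, $T_L,T_R>0$, a sufficiently large $K$ ($K\gg T_L,T_R$) and $R(a,b)=\min\{K,\sqrt{\min(a,b)}\}$. The stochastic energy exchange model is the Markov jump process $\mathbf{E}_t=(E_1(t),\dots,E_N(t))$ on $\mathbb{R}^N_+$: for $i=1,\dots,N-1$ a clock of rate $R(E_i,E_{i+1})$ on sites $i,i+1$; when it rings $(E_i,E_{i+1})\mapsto(p(E_i+E_{i+1}),(1-p)(E_i+E_{i+1}))$, $p$ uniform on $(0,1)$; a clock of rate $R(T_L,E_1)$ (resp. $R(E_N,T_R)$) with $E_1\mapsto p(E_1+X_L)$ (resp. $E_N\mapsto p(E_N+X_R)$), $X_L,X_R$ exponential with means $T_L,T_R$; all independent. $P^t$ is its transition kernel; $h>0$ is the fixed (sufficiently small) time step used in the paper. *)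

theory Defs
  imports "HOL-Probability.Probability"
begin

text \<open>Sites are indexed 0,...,N-1 (site i of the paper is index i-1).
  States are functions nat => real, extensional on {..<N}.\<close>

definition see_rate :: "real \<Rightarrow> real \<Rightarrow> real \<Rightarrow> real" where
  "see_rate K a b = min K (sqrt (min a b))"

definition see_space :: "nat \<Rightarrow> (nat \<Rightarrow> real) measure" where
  "see_space N = PiM {..<N} (\<lambda>_. lborel)"

definition see_orthant :: "nat \<Rightarrow> (nat \<Rightarrow> real) set" where
  "see_orthant N = PiE {..<N} (\<lambda>_. {0<..})"

definition unif01 :: "real measure" where
  "unif01 = uniform_measure lborel {0<..<1}"

definition expo :: "real \<Rightarrow> real measure" where
  "expo T = density lborel (exponential_density (1 / T))"

definition bond_move :: "nat \<Rightarrow> real \<Rightarrow> (nat \<Rightarrow> real) \<Rightarrow> (nat \<Rightarrow> real)" where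
  "bond_move i p x = x(i := p * (x i + x (Suc i)), Suc i := (1 - p) * (x i + x (Suc i)))"

definition left_move :: "real \<Rightarrow> real \<Rightarrow> (nat \<Rightarrow> real) \<Rightarrow> (nat \<Rightarrow> real)" where
  "left_move p X x = x(0 := p * (x 0 + X))"

definition right_move :: "nat \<Rightarrow> real \<Rightarrow> real \<Rightarrow> (nat \<Rightarrow> real) \<Rightarrow> (nat \<Rightarrow> real)" where
  "right_move N p X x = x(N - 1 := p * (x (N - 1) + X))"

definition total_rate :: "nat \<Rightarrow> real \<Rightarrow> real \<Rightarrow> real \<Rightarrow> (nat \<Rightarrow> real) \<Rightarrow> real" where
  "total_rate N K TL TR x =
     (\<Sum>i<N - 1. see_rate K (x i) (x (Suc i))) + see_rate K TL (x 0) + see_rate K (x (N - 1)) TR"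

definition jump_rate_kernel ::
  "nat \<Rightarrow> real \<Rightarrow> real \<Rightarrow> real \<Rightarrow> (nat \<Rightarrow> real) \<Rightarrow> (nat \<Rightarrow> real) set \<Rightarrow> ennreal" where
  "jump_rate_kernel N K TL TR x A =
     (\<Sum>i<N - 1. ennreal (see_rate K (x i) (x (Suc i))) * emeasure unif01 {p. bond_move i p x \<in> A})
     + ennreal (see_rate K TL (x 0)) * emeasure (unif01 \<Otimes>\<^sub>M expo TL) {(p, X). left_move p X x \<in> A}
     + ennreal (see_rate K (x (N - 1)) TR) * emeasure (unif01 \<Otimes>\<^sub>M expo TR) {(p, X). right_move N p X x \<in> A}"

text \<open>Uniformization constant: every rate is at most K and there are N+1 clocks.\<close>
definition unif_const :: "nat \<Rightarrow> real \<Rightarrow> real" where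
  "unif_const N K = real (N + 1) * K"

text \<open>One step of the uniformized chain: Q = I + G / Lambda.\<close>
definition unif_step ::
  "nat \<Rightarrow> real \<Rightarrow> real \<Rightarrow> real \<Rightarrow> (nat \<Rightarrow> real) \<Rightarrow> (nat \<Rightarrow> real) set \<Rightarrow> ennreal" where
  "unif_step N K TL TR x A =
     jump_rate_kernel N K TL TR x A / ennreal (unif_const N K)
     + ennreal (1 - total_rate N K TL TR x / unif_const N K) * indicator A x"

definition unif_step_measure ::
  "nat \<Rightarrow> real \<Rightarrow> real \<Rightarrow> real \<Rightarrow> (nat \<Rightarrow> real) \<Rightarrow> (nat \<Rightarrow> real) measure" where
  "unif_step_measure N K TL TR x =
     measure_of (space (see_space N)) (sets (see_space N)) (unif_step N K TL TR x)"

fun unif_iter ::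
  "nat \<Rightarrow> real \<Rightarrow> real \<Rightarrow> real \<Rightarrow> nat \<Rightarrow> (nat \<Rightarrow> real) \<Rightarrow> (nat \<Rightarrow> real) set \<Rightarrow> ennreal" where
  "unif_iter N K TL TR 0 x A = indicator A x"
| "unif_iter N K TL TR (Suc k) x A =
     (\<integral>\<^sup>+ y. unif_iter N K TL TR k y A \<partial>(unif_step_measure N K TL TR x))"

text \<open>Transition kernel P^t(x,A) of the (bounded-rate) Markov jump process,
  given by the uniformization formula
  P^t = sum_k exp(-Lambda t) (Lambda t)^k / k! Q^k.\<close>
definition see_kernel ::
  "nat \<Rightarrow> real \<Rightarrow> real \<Rightarrow> real \<Rightarrow> real \<Rightarrow> (nat \<Rightarrow> real) \<Rightarrow> (nat \<Rightarrow> real) set \<Rightarrow> ennreal" where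
  "see_kernel N K TL TR t x A =
     (\<Sum>k. ennreal (exp (- unif_const N K * t) * (unif_const N K * t) ^ k / fact k)
            * unif_iter N K TL TR k x A)"

end

theory Submission
  imports Defs
begin


lemma space_see: "space (see_space N) = PiE {..<N} (\<lambda>_. UNIV)"
  by (simp add: see_space_def space_PiM)

lemma sets_unif01[measurable_cong, simp]: "sets unif01 = sets borel"
  by (simp add: unif01_def)
lemma sets_expo[measurable_cong, simp]: "sets (expo T) = sets borel"
  by (simp add: expo_def)
lemma space_unif01[simp]: "space unif01 = UNIV"
  by (simp add: unif01_def)
lemma space_expo[simp]: "space (expo T) = UNIV"
  by (simp add: expo_def)

lemma bond_move_meas:
  assumes "Suc i < N"
  shows "(\<lambda>(x,p). bond_move i p x) \<in> measurable (see_space N \<Otimes>\<^sub>M borel) (see_space N)"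
proof -
  have eq: "(\<lambda>(x,p). bond_move i p x) = (\<lambda>w k. if k = Suc i then (1 - snd w) * (fst w i + fst w (Suc i))
      else if k = i then snd w * (fst w i + fst w (Suc i)) else fst w k)"
    by (auto simp: bond_move_def fun_eq_iff)
  show ?thesis unfolding eq see_space_def
    apply (rule measurable_PiM_single')
    using assms apply (auto simp: space_pair_measure space_PiM PiE_def extensional_def)
    done
qed


lemma comp_meas: "k < N \<Longrightarrow> (\<lambda>x. x k) \<in> borel_measurable (see_space N)"
proof -
  assume k: "k < N"
  have "(\<lambda>x. x k) \<in> measurable (PiM {..<N} (\<lambda>_. lborel)) lborel"
    by (rule measurable_component_singleton) (use k in auto)
  then show ?thesis unfolding see_space_def by simp
qed

lemma meas_into_S:
  assumes "\<And>k. k < N \<Longrightarrow> (\<lambda>\<omega>. f \<omega> k) \<in> borel_measurable M"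
    and "\<And>\<omega> k. \<omega> \<in> space M \<Longrightarrow> k \<ge> N \<Longrightarrow> f \<omega> k = undefined"
  shows "f \<in> measurable M (see_space N)"
proof -
  have "(\<lambda>\<omega> k. (\<lambda>k \<omega>. f \<omega> k) k \<omega>) \<in> measurable M (PiM {..<N} (\<lambda>_. lborel))"
    apply (rule measurable_PiM_single')
    using assms(1) apply simp
    using assms(2) by (auto simp: PiE_def extensional_def)
  then show ?thesis by (simp add: see_space_def)
qed

lemma left_move_meas:
  assumes "0 < N"
  shows "(\<lambda>(x,w). left_move (fst w) (snd w) x) \<in> measurable (see_space N \<Otimes>\<^sub>M (borel \<Otimes>\<^sub>M borel)) (see_space N)"
proof (rule meas_into_S)
  fix k assume k: "k < N"
  have c: "(\<lambda>w. (fst w :: nat \<Rightarrow> real) j) \<in> borel_measurable (see_space N \<Otimes>\<^sub>M (borel \<Otimes>\<^sub>M borel))" if "j < N" for j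
    by (rule measurable_compose[OF measurable_fst comp_meas[OF that]])
  show "(\<lambda>\<omega>. (case \<omega> of (x, w) \<Rightarrow> left_move (fst w) (snd w) x) k) \<in> borel_measurable (see_space N \<Otimes>\<^sub>M (borel \<Otimes>\<^sub>M borel))"
  proof (cases "k = 0")
    case True
    have e: "(\<lambda>\<omega>. (case \<omega> of (x, w) \<Rightarrow> left_move (fst w) (snd w) x) k) = (\<lambda>\<omega>. fst (snd \<omega>) * (fst \<omega> 0 + snd (snd \<omega>)))"
      using True by (auto simp: left_move_def split: prod.splits)
    show ?thesis unfolding e using c[OF assms] by measurable
  next
    case False
    have e: "(\<lambda>\<omega>. (case \<omega> of (x, w) \<Rightarrow> left_move (fst w) (snd w) x) k) = (\<lambda>\<omega>. fst \<omega> k)"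
      using False by (auto simp: left_move_def split: prod.splits)
    show ?thesis unfolding e using c[OF k] .
  qed
next
  fix \<omega> :: "(nat \<Rightarrow> real) \<times> real \<times> real" and k assume "\<omega> \<in> space (see_space N \<Otimes>\<^sub>M (borel \<Otimes>\<^sub>M borel))" "N \<le> k"
  then show "(case \<omega> of (x, w) \<Rightarrow> left_move (fst w) (snd w) x) k = undefined"
    using assms by (auto simp: left_move_def space_pair_measure space_see PiE_def extensional_def split: prod.splits)
qed

lemma right_move_meas:
  assumes "0 < N"
  shows "(\<lambda>(x,w). right_move N (fst w) (snd w) x) \<in> measurable (see_space N \<Otimes>\<^sub>M (borel \<Otimes>\<^sub>M borel)) (see_space N)"
proof (rule meas_into_S)
  fix k assume k: "k < N"
  have c: "(\<lambda>w. (fst w :: nat \<Rightarrow> real) j) \<in> borel_measurable (see_space N \<Otimes>\<^sub>M (borel \<Otimes>\<^sub>M borel))" if "j < N" for j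
    by (rule measurable_compose[OF measurable_fst comp_meas[OF that]])
  show "(\<lambda>\<omega>. (case \<omega> of (x, w) \<Rightarrow> right_move N (fst w) (snd w) x) k) \<in> borel_measurable (see_space N \<Otimes>\<^sub>M (borel \<Otimes>\<^sub>M borel))"
  proof (cases "k = N - 1")
    case True
    have e: "(\<lambda>\<omega>. (case \<omega> of (x, w) \<Rightarrow> right_move N (fst w) (snd w) x) k) = (\<lambda>\<omega>. fst (snd \<omega>) * (fst \<omega> (N - 1) + snd (snd \<omega>)))"
      using True by (auto simp: right_move_def split: prod.splits)
    have "N - 1 < N" using assms by simp
    show ?thesis unfolding e using c[OF \<open>N - 1 < N\<close>] by measurable
  next
    case False
    have e: "(\<lambda>\<omega>. (case \<omega> of (x, w) \<Rightarrow> right_move N (fst w) (snd w) x) k) = (\<lambda>\<omega>. fst \<omega> k)"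
      using False by (auto simp: right_move_def split: prod.splits)
    show ?thesis unfolding e using c[OF k] .
  qed
next
  fix \<omega> :: "(nat \<Rightarrow> real) \<times> real \<times> real" and k assume "\<omega> \<in> space (see_space N \<Otimes>\<^sub>M (borel \<Otimes>\<^sub>M borel))" "N \<le> k"
  then show "(case \<omega> of (x, w) \<Rightarrow> right_move N (fst w) (snd w) x) k = undefined"
    using assms by (auto simp: right_move_def space_pair_measure space_see PiE_def extensional_def split: prod.splits)
qed

lemma meas_slice: "f \<in> measurable (M \<Otimes>\<^sub>M N) L \<Longrightarrow> x \<in> space M \<Longrightarrow> (\<lambda>y. f (x,y)) \<in> measurable N L"
  by (rule measurable_compose[OF measurable_Pair1'])

lemma bond_meas1: "Suc i < N \<Longrightarrow> x \<in> space (see_space N) \<Longrightarrow> (\<lambda>p. bond_move i p x) \<in> measurable unif01 (see_space N)"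
  using meas_slice[OF bond_move_meas, of i N x] by (simp cong: measurable_cong_sets)

lemma left_meas1: "0 < N \<Longrightarrow> x \<in> space (see_space N) \<Longrightarrow> (\<lambda>w. left_move (fst w) (snd w) x) \<in> measurable (unif01 \<Otimes>\<^sub>M expo T) (see_space N)"
proof -
  assume a: "0 < N" "x \<in> space (see_space N)"
  have "sets (unif01 \<Otimes>\<^sub>M expo T) = sets (borel \<Otimes>\<^sub>M borel)" by (rule sets_pair_measure_cong) simp_all
  then show ?thesis using meas_slice[OF left_move_meas, of N x] a by (simp cong: measurable_cong_sets)
qed

lemma right_meas1: "0 < N \<Longrightarrow> x \<in> space (see_space N) \<Longrightarrow> (\<lambda>w. right_move N (fst w) (snd w) x) \<in> measurable (unif01 \<Otimes>\<^sub>M expo T) (see_space N)"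
proof -
  assume a: "0 < N" "x \<in> space (see_space N)"
  have "sets (unif01 \<Otimes>\<^sub>M expo T) = sets (borel \<Otimes>\<^sub>M borel)" by (rule sets_pair_measure_cong) simp_all
  then show ?thesis using meas_slice[OF right_move_meas, of N x] a by (simp cong: measurable_cong_sets)
qed


lemma ca_emeasure: "sets M = S \<Longrightarrow> countably_additive S (emeasure M)"
  by (auto simp: countably_additive_def suminf_emeasure)
lemma ca_cmult: "countably_additive S f \<Longrightarrow> countably_additive S (\<lambda>A. (c::ennreal) * f A)"
  by (auto simp: countably_additive_def)
lemma ca_divide: "countably_additive S f \<Longrightarrow> countably_additive S (\<lambda>A. f A / (c::ennreal))"
  by (auto simp: countably_additive_def)
lemma ca_add: "countably_additive S f \<Longrightarrow> countably_additive S g \<Longrightarrow> countably_additive S (\<lambda>A. f A + g A :: ennreal)"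
  unfolding countably_additive_def
proof (intro allI impI)
  fix A :: "nat \<Rightarrow> _"
  assume f: "\<forall>A. range A \<subseteq> S \<longrightarrow> disjoint_family A \<longrightarrow> \<Union> (range A) \<in> S \<longrightarrow> (\<Sum>i. f (A i)) = f (\<Union> (range A))"
    and g: "\<forall>A. range A \<subseteq> S \<longrightarrow> disjoint_family A \<longrightarrow> \<Union> (range A) \<in> S \<longrightarrow> (\<Sum>i. g (A i)) = g (\<Union> (range A))"
    and a: "range A \<subseteq> S" "disjoint_family A" "\<Union> (range A) \<in> S"
  have "(\<Sum>i. f (A i) + g (A i)) = (\<Sum>i. f (A i)) + (\<Sum>i. g (A i))"
    by (rule suminf_add[OF summableI summableI, symmetric])
  also have "\<dots> = f (\<Union> (range A)) + g (\<Union> (range A))" using f g a by simp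
  finally show "(\<Sum>i. f (A i) + g (A i)) = f (\<Union> (range A)) + g (\<Union> (range A))" .
qed

lemma ca_sum: "finite I \<Longrightarrow> (\<And>i. i \<in> I \<Longrightarrow> countably_additive S (f i)) \<Longrightarrow> countably_additive S (\<lambda>A. \<Sum>i\<in>I. f i A :: ennreal)"
proof (induction I rule: finite_induct)
  case empty then show ?case by (simp add: countably_additive_def)
next
  case (insert x F)
  have "countably_additive S (\<lambda>A. f x A + (\<Sum>i\<in>F. f i A))"
    by (rule ca_add) (use insert in auto)
  then show ?case using insert(1,2) by simp
qed

lemma ca_cong: "countably_additive S f \<Longrightarrow> (\<And>A. A \<in> S \<Longrightarrow> f A = g A) \<Longrightarrow> countably_additive S g"
  unfolding countably_additive_def
proof (intro allI impI)
  fix A :: "nat \<Rightarrow> _"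
  assume f: "\<forall>A. range A \<subseteq> S \<longrightarrow> disjoint_family A \<longrightarrow> \<Union> (range A) \<in> S \<longrightarrow> (\<Sum>i. f (A i)) = f (\<Union> (range A))"
    and e: "\<And>A. A \<in> S \<Longrightarrow> f A = g A"
    and a: "range A \<subseteq> S" "disjoint_family A" "\<Union> (range A) \<in> S"
  have "(\<Sum>i. g (A i)) = (\<Sum>i. f (A i))" using a(1) e by (metis range_subsetD)
  also have "\<dots> = f (\<Union> (range A))" using f a by blast
  also have "\<dots> = g (\<Union> (range A))" using e a by blast
  finally show "(\<Sum>i. g (A i)) = g (\<Union> (range A))" .
qed

abbreviation "SS N \<equiv> see_space N"

lemma unif_step_decomp:
  assumes N: "0 < N" and x: "x \<in> space (SS N)" and A: "A \<in> sets (SS N)"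
  shows "unif_step N K TL TR x A =
    ((\<Sum>i<N - 1. ennreal (see_rate K (x i) (x (Suc i))) * emeasure (distr unif01 (SS N) (\<lambda>p. bond_move i p x)) A)
     + ennreal (see_rate K TL (x 0)) * emeasure (distr (unif01 \<Otimes>\<^sub>M expo TL) (SS N) (\<lambda>w. left_move (fst w) (snd w) x)) A
     + ennreal (see_rate K (x (N - 1)) TR) * emeasure (distr (unif01 \<Otimes>\<^sub>M expo TR) (SS N) (\<lambda>w. right_move N (fst w) (snd w) x)) A)
     / ennreal (unif_const N K)
    + ennreal (1 - total_rate N K TL TR x / unif_const N K) * emeasure (return (SS N) x) A"
proof -
  have b: "emeasure unif01 {p. bond_move i p x \<in> A} = emeasure (distr unif01 (SS N) (\<lambda>p. bond_move i p x)) A" if "i < N - 1" for i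
  proof -
    have "Suc i < N" using that by simp
    then show ?thesis using A by (subst emeasure_distr[OF bond_meas1[OF _ x]]) (auto intro!: arg_cong[where f="emeasure unif01"])
  qed
  have l: "emeasure (unif01 \<Otimes>\<^sub>M expo TL) {(p, X). left_move p X x \<in> A} = emeasure (distr (unif01 \<Otimes>\<^sub>M expo TL) (SS N) (\<lambda>w. left_move (fst w) (snd w) x)) A"
    using A by (subst emeasure_distr[OF left_meas1[OF N x]]) (auto simp: space_pair_measure intro!: arg_cong[where f="emeasure _"])
  have r: "emeasure (unif01 \<Otimes>\<^sub>M expo TR) {(p, X). right_move N p X x \<in> A} = emeasure (distr (unif01 \<Otimes>\<^sub>M expo TR) (SS N) (\<lambda>w. right_move N (fst w) (snd w) x)) A"
    using A by (subst emeasure_distr[OF right_meas1[OF N x]]) (auto simp: space_pair_measure intro!: arg_cong[where f="emeasure _"])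
  have s: "(\<Sum>i<N - 1. ennreal (see_rate K (x i) (x (Suc i))) * emeasure unif01 {p. bond_move i p x \<in> A})
     = (\<Sum>i<N - 1. ennreal (see_rate K (x i) (x (Suc i))) * emeasure (distr unif01 (SS N) (\<lambda>p. bond_move i p x)) A)"
    by (rule sum.cong) (simp_all only: b lessThan_iff)
  show ?thesis
    unfolding unif_step_def jump_rate_kernel_def by (simp only: s l r emeasure_return[OF A])
qed

lemma unif_step_ca:
  assumes N: "0 < N" and x: "x \<in> space (SS N)"
  shows "countably_additive (sets (SS N)) (unif_step N K TL TR x)"
proof (rule ca_cong[OF _ unif_step_decomp[OF N x, symmetric]])
  let ?S = "sets (SS N)"
  have c1: "countably_additive ?S (\<lambda>A. \<Sum>i<N - 1. ennreal (see_rate K (x i) (x (Suc i))) * emeasure (distr unif01 (SS N) (\<lambda>p. bond_move i p x)) A)"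
    by (rule ca_sum) (auto intro!: ca_cmult ca_emeasure)
  have c2: "countably_additive ?S (\<lambda>A. ennreal (see_rate K TL (x 0)) * emeasure (distr (unif01 \<Otimes>\<^sub>M expo TL) (SS N) (\<lambda>w. left_move (fst w) (snd w) x)) A)"
    by (rule ca_cmult, rule ca_emeasure) simp
  have c3: "countably_additive ?S (\<lambda>A. ennreal (see_rate K (x (N - 1)) TR) * emeasure (distr (unif01 \<Otimes>\<^sub>M expo TR) (SS N) (\<lambda>w. right_move N (fst w) (snd w) x)) A)"
    by (rule ca_cmult, rule ca_emeasure) simp
  have c4: "countably_additive ?S (\<lambda>A. ennreal (1 - total_rate N K TL TR x / unif_const N K) * emeasure (return (SS N) x) A)"
    by (rule ca_cmult, rule ca_emeasure) simp
  show "countably_additive ?S (\<lambda>A.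
    ((\<Sum>i<N - 1. ennreal (see_rate K (x i) (x (Suc i))) * emeasure (distr unif01 (SS N) (\<lambda>p. bond_move i p x)) A)
     + ennreal (see_rate K TL (x 0)) * emeasure (distr (unif01 \<Otimes>\<^sub>M expo TL) (SS N) (\<lambda>w. left_move (fst w) (snd w) x)) A
     + ennreal (see_rate K (x (N - 1)) TR) * emeasure (distr (unif01 \<Otimes>\<^sub>M expo TR) (SS N) (\<lambda>w. right_move N (fst w) (snd w) x)) A)
     / ennreal (unif_const N K)
    + ennreal (1 - total_rate N K TL TR x / unif_const N K) * emeasure (return (SS N) x) A)"
    by (rule ca_add[OF ca_divide[OF ca_add[OF ca_add[OF c1 c2] c3]] c4])
qed

lemma emeasure_step:
  assumes N: "0 < N" and x: "x \<in> space (SS N)" and A: "A \<in> sets (SS N)"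
  shows "emeasure (unif_step_measure N K TL TR x) A = unif_step N K TL TR x A"
  unfolding unif_step_measure_def
proof (rule emeasure_measure_of_sigma[OF _ _ unif_step_ca[OF N x] A])
  show "sigma_algebra (space (SS N)) (sets (SS N))" by (rule sets.sigma_algebra_axioms)
  show "positive (sets (SS N)) (unif_step N K TL TR x)"
    by (simp add: positive_def unif_step_def jump_rate_kernel_def)
qed

lemma sets_step[simp, measurable_cong]: "sets (unif_step_measure N K TL TR x) = sets (SS N)"
  unfolding unif_step_measure_def by (simp add: sets.sets_measure_of_eq)

lemma space_step[simp]: "space (unif_step_measure N K TL TR x) = space (SS N)"
  unfolding unif_step_measure_def by (simp add: sets.space_measure_of_eq)

lemma step_lb_gen:
  assumes N: "0 < N" and x: "x \<in> space (SS N)" and G: "G \<in> borel_measurable (SS N)"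
    and f: "f \<in> measurable M (SS N)"
    and le: "\<And>A. A \<in> sets (SS N) \<Longrightarrow> c * emeasure (distr M (SS N) f) A \<le> unif_step N K TL TR x A"
  shows "c * (\<integral>\<^sup>+w. G (f w) \<partial>M) \<le> (\<integral>\<^sup>+y. G y \<partial>(unif_step_measure N K TL TR x))"
proof -
  let ?M' = "scale_measure c (distr M (SS N) f)"
  have "?M' \<le> unif_step_measure N K TL TR x"
    unfolding le_measure_iff
  proof (simp add: space_scale_measure le_fun_def, intro allI)
    fix A show "c * emeasure (distr M (SS N) f) A \<le> emeasure (unif_step_measure N K TL TR x) A"
    proof (cases "A \<in> sets (SS N)")
      case True then show ?thesis using le emeasure_step[OF N x True] by simp
    next
      case False then show ?thesis by (simp add: emeasure_notin_sets)
    qed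
  qed
  then have "nn_integral ?M' G \<le> nn_integral (unif_step_measure N K TL TR x) G"
    by (intro nn_integral_mono_measure) simp_all
  moreover have "nn_integral ?M' G = c * (\<integral>\<^sup>+w. G (f w) \<partial>M)"
    using G f by (simp add: nn_integral_scale_measure nn_integral_distr)
  ultimately show ?thesis by simp
qed

lemma step_lb_bond:
  assumes N: "0 < N" and x: "x \<in> space (SS N)" and G: "G \<in> borel_measurable (SS N)" and i: "Suc i < N"
  shows "(ennreal (see_rate K (x i) (x (Suc i))) / ennreal (unif_const N K)) * (\<integral>\<^sup>+p. G (bond_move i p x) \<partial>unif01)
     \<le> (\<integral>\<^sup>+y. G y \<partial>(unif_step_measure N K TL TR x))"
proof (rule step_lb_gen[OF N x G bond_meas1[OF i x]])
  fix A assume A: "A \<in> sets (SS N)"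
  let ?t = "\<lambda>i. ennreal (see_rate K (x i) (x (Suc i))) * emeasure (distr unif01 (SS N) (\<lambda>p. bond_move i p x)) A"
  have h1: "?t i \<le> (\<Sum>i<N - 1. ?t i)"
    by (rule member_le_sum) (use i in auto)
  have h2: "(\<Sum>i<N - 1. ?t i) \<le> (\<Sum>i<N - 1. ?t i)
     + ennreal (see_rate K TL (x 0)) * emeasure (distr (unif01 \<Otimes>\<^sub>M expo TL) (SS N) (\<lambda>w. left_move (fst w) (snd w) x)) A
     + ennreal (see_rate K (x (N - 1)) TR) * emeasure (distr (unif01 \<Otimes>\<^sub>M expo TR) (SS N) (\<lambda>w. right_move N (fst w) (snd w) x)) A"
    by (simp add: add.assoc)
  note h = order_trans[OF h1 h2]
  have "?t i / ennreal (unif_const N K) \<le> unif_step N K TL TR x A"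
    unfolding unif_step_decomp[OF N x A]
    by (rule add_increasing2[OF zero_le divide_right_mono_ennreal[OF h]])
  then show "(ennreal (see_rate K (x i) (x (Suc i))) / ennreal (unif_const N K)) * emeasure (distr unif01 (SS N) (\<lambda>p. bond_move i p x)) A \<le> unif_step N K TL TR x A"
    by (simp add: ennreal_divide_times ennreal_times_divide mult.commute)
qed

lemma step_lb_right:
  assumes N: "0 < N" and x: "x \<in> space (SS N)" and G: "G \<in> borel_measurable (SS N)"
  shows "(ennreal (see_rate K (x (N - 1)) TR) / ennreal (unif_const N K)) * (\<integral>\<^sup>+w. G (right_move N (fst w) (snd w) x) \<partial>(unif01 \<Otimes>\<^sub>M expo TR))
     \<le> (\<integral>\<^sup>+y. G y \<partial>(unif_step_measure N K TL TR x))"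
proof (rule step_lb_gen[OF N x G right_meas1[OF N x]])
  fix A assume A: "A \<in> sets (SS N)"
  let ?t = "ennreal (see_rate K (x (N - 1)) TR) * emeasure (distr (unif01 \<Otimes>\<^sub>M expo TR) (SS N) (\<lambda>w. right_move N (fst w) (snd w) x)) A"
  have "?t / ennreal (unif_const N K) \<le> unif_step N K TL TR x A"
    unfolding unif_step_decomp[OF N x A]
    by (rule add_increasing2[OF zero_le divide_right_mono_ennreal]) (simp add: add_increasing)
  then show "(ennreal (see_rate K (x (N - 1)) TR) / ennreal (unif_const N K)) * emeasure (distr (unif01 \<Otimes>\<^sub>M expo TR) (SS N) (\<lambda>w. right_move N (fst w) (snd w) x)) A \<le> unif_step N K TL TR x A"
    by (simp add: ennreal_divide_times ennreal_times_divide mult.commute)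
qed

lemma prob_unif01: "prob_space unif01"
  unfolding unif01_def by (rule prob_space_uniform_measure) simp_all

lemma prob_expo: "0 < T \<Longrightarrow> prob_space (expo T)"
  unfolding expo_def by (rule prob_space_exponential_density) simp

lemma prob_pairUE: "0 < T \<Longrightarrow> prob_space (unif01 \<Otimes>\<^sub>M expo T)"
proof -
  assume T: "0 < T"
  interpret U: prob_space unif01 by (rule prob_unif01)
  interpret E: prob_space "expo T" by (rule prob_expo[OF T])
  interpret P: pair_prob_space unif01 "expo T" by standard
  show ?thesis by (rule P.prob_space_axioms)
qed

datatype mv = Bd nat | Rt

fun Fm :: "nat \<Rightarrow> real \<Rightarrow> real \<Rightarrow> mv list \<Rightarrow> ((nat \<Rightarrow> real) \<Rightarrow> ennreal) \<Rightarrow> (nat \<Rightarrow> real) \<Rightarrow> ennreal" where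
  "Fm N K TR [] \<phi> x = \<phi> x"
| "Fm N K TR (Bd i # ms) \<phi> x = (ennreal (see_rate K (x i) (x (Suc i))) / ennreal (unif_const N K)) *
      (\<integral>\<^sup>+p. Fm N K TR ms \<phi> (bond_move i p x) \<partial>unif01)"
| "Fm N K TR (Rt # ms) \<phi> x = (ennreal (see_rate K (x (N - 1)) TR) / ennreal (unif_const N K)) *
      (\<integral>\<^sup>+w. Fm N K TR ms \<phi> (right_move N (fst w) (snd w) x) \<partial>(unif01 \<Otimes>\<^sub>M expo TR))"

definition valid :: "nat \<Rightarrow> mv list \<Rightarrow> bool" where
  "valid N ms \<longleftrightarrow> (\<forall>i. Bd i \<in> set ms \<longrightarrow> Suc i < N)"

lemma rate_meas: "i < N \<Longrightarrow> j < N \<Longrightarrow> (\<lambda>x. ennreal (see_rate K (x i) (x j)) / c) \<in> borel_measurable (SS N)"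
  unfolding see_rate_def using comp_meas[of i N] comp_meas[of j N] by measurable

lemma rate_meas2: "i < N \<Longrightarrow> (\<lambda>x. ennreal (see_rate K (x i) T) / c) \<in> borel_measurable (SS N)"
  unfolding see_rate_def using comp_meas[of i N] by measurable

lemma Fm_meas:
  assumes N: "0 < N" and T: "0 < TR" and phi: "\<phi> \<in> borel_measurable (SS N)"
  shows "valid N ms \<Longrightarrow> Fm N K TR ms \<phi> \<in> borel_measurable (SS N)"
proof (induction ms)
  case Nil then show ?case using phi by (simp add: fun_eq_iff[symmetric] cong: measurable_cong)
next
  case (Cons m ms)
  have v: "valid N ms" using Cons.prems by (simp add: valid_def)
  note IH = Cons.IH[OF v]
  show ?case
  proof (cases m)
    case (Bd i)
    have i: "Suc i < N" using Cons.prems Bd by (simp add: valid_def)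
    interpret U: prob_space unif01 by (rule prob_unif01)
    have m1: "(\<lambda>(x,p). bond_move i p x) \<in> measurable (SS N \<Otimes>\<^sub>M unif01) (SS N)"
      using bond_move_meas[OF i] by (simp cong: measurable_cong_sets)
    have "case_prod (\<lambda>x p. Fm N K TR ms \<phi> (bond_move i p x)) \<in> borel_measurable (SS N \<Otimes>\<^sub>M unif01)"
      using measurable_compose[OF m1 IH] by (simp add: case_prod_beta')
    then have "(\<lambda>x. \<integral>\<^sup>+p. Fm N K TR ms \<phi> (bond_move i p x) \<partial>unif01) \<in> borel_measurable (SS N)"
      by (rule U.borel_measurable_nn_integral)
    then show ?thesis using Bd rate_meas[of i N "Suc i" K "ennreal (unif_const N K)"] i
      by (simp add: borel_measurable_times_ennreal fun_eq_iff[symmetric])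
  next
    case Rt
    interpret P: prob_space "unif01 \<Otimes>\<^sub>M expo TR" by (rule prob_pairUE[OF T])
    have ss: "sets (unif01 \<Otimes>\<^sub>M expo TR) = sets (borel \<Otimes>\<^sub>M borel)" by (rule sets_pair_measure_cong) simp_all
    have m1: "(\<lambda>(x,w). right_move N (fst w) (snd w) x) \<in> measurable (SS N \<Otimes>\<^sub>M (unif01 \<Otimes>\<^sub>M expo TR)) (SS N)"
      using right_move_meas[OF N] ss by (simp cong: measurable_cong_sets)
    have "case_prod (\<lambda>x w. Fm N K TR ms \<phi> (right_move N (fst w) (snd w) x)) \<in> borel_measurable (SS N \<Otimes>\<^sub>M (unif01 \<Otimes>\<^sub>M expo TR))"
      using measurable_compose[OF m1 IH] by (simp add: case_prod_beta')
    then have "(\<lambda>x. \<integral>\<^sup>+w. Fm N K TR ms \<phi> (right_move N (fst w) (snd w) x) \<partial>(unif01 \<Otimes>\<^sub>M expo TR)) \<in> borel_measurable (SS N)"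
      by (rule P.borel_measurable_nn_integral)
    then show ?thesis using Rt rate_meas2[of "N - 1" N K TR "ennreal (unif_const N K)"] N
      by (simp add: fun_eq_iff[symmetric])
  qed
qed

lemma iter_ge_Fm:
  assumes N: "0 < N" and T: "0 < TR" and A: "A \<in> sets (SS N)"
  shows "valid N ms \<Longrightarrow> x \<in> space (SS N) \<Longrightarrow> Fm N K TR ms (indicator A) x \<le> unif_iter N K TL TR (length ms) x A"
proof (induction ms arbitrary: x)
  case Nil then show ?case by simp
next
  case (Cons m ms)
  have v: "valid N ms" using Cons.prems by (simp add: valid_def)
  have G: "Fm N K TR ms (indicator A) \<in> borel_measurable (SS N)"
    by (rule Fm_meas[OF N T _ v]) (use A in simp)
  have mono: "(\<integral>\<^sup>+y. Fm N K TR ms (indicator A) y \<partial>unif_step_measure N K TL TR x) \<le> unif_iter N K TL TR (length (m # ms)) x A"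
    by (simp, rule nn_integral_mono) (use Cons.IH[OF v] in simp)
  show ?case
  proof (cases m)
    case (Bd i)
    have i: "Suc i < N" using Cons.prems Bd by (simp add: valid_def)
    show ?thesis using order_trans[OF step_lb_bond[OF N Cons.prems(2) G i] mono] Bd by simp
  next
    case Rt
    show ?thesis using order_trans[OF step_lb_right[OF N Cons.prems(2) G] mono] Rt by simp
  qed
qed

lemma pos_lemma:
  assumes u: "u \<in> borel_measurable M" and E: "E \<in> sets M" "0 < emeasure M E" and pos: "\<And>x. x \<in> E \<Longrightarrow> 0 < u x"
  shows "0 < (\<integral>\<^sup>+x. u x \<partial>M)"
proof (rule ccontr)
  assume "\<not> 0 < (\<integral>\<^sup>+x. u x \<partial>M)"
  then have "(\<integral>\<^sup>+x. u x \<partial>M) = 0" by (simp add: not_less)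
  then have z: "emeasure M {x\<in>space M. u x \<noteq> 0} = 0" using nn_integral_0_iff[OF u] by simp
  have "E \<subseteq> {x\<in>space M. u x \<noteq> 0}" using pos sets.sets_into_space[OF E(1)] by force
  then have "emeasure M E \<le> emeasure M {x\<in>space M. u x \<noteq> 0}"
    by (intro emeasure_mono) (use u in auto)
  with z E(2) show False by simp
qed

lemma unif01_emeasure: "E \<in> sets borel \<Longrightarrow> E \<subseteq> {0<..<1} \<Longrightarrow> emeasure unif01 E = emeasure lborel E"
  unfolding unif01_def by (subst emeasure_uniform_measure) (auto simp: Int_absorb1 divide_ennreal_def)

lemma landing:
  fixes U M :: real
  assumes UM: "M < U" "0 < M" and B: "B \<in> sets borel" and BM: "0 < emeasure lborel (B \<inter> {0<..<M})"
    and g: "g \<in> borel_measurable borel" and gpos: "\<And>p. 0 < p \<Longrightarrow> p < 1 \<Longrightarrow> p * U \<in> B \<Longrightarrow> 0 < g p"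
  shows "0 < (\<integral>\<^sup>+p. g p \<partial>unif01)"
proof -
  let ?B' = "B \<inter> {0<..<U}"
  let ?E = "{p\<in>{0<..<1}. p * U \<in> B}"
  have U0: "U \<noteq> 0" "0 < U" using UM by auto
  have Eeq: "?E = ((*) U) -` ?B' \<inter> space lborel"
    using U0 by (auto simp: field_simps mult.commute[of U] intro: mult_pos_pos) (auto simp: zero_less_mult_iff mult.commute)
  have B'm: "?B' \<in> sets borel" using B by simp
  have "emeasure lborel ?E = emeasure (distr lborel borel ((*) U)) ?B'"
    by (subst emeasure_distr) (use B'm Eeq in auto)
  also have "\<dots> = emeasure (density lborel (\<lambda>_. ennreal (inverse \<bar>U\<bar>))) ?B'"
    using lborel_distr_mult[OF U0(1)] by simp
  also have "\<dots> = (\<integral>\<^sup>+x. ennreal (inverse \<bar>U\<bar>) * indicator ?B' x \<partial>lborel)"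
    by (rule emeasure_density) (use B'm in auto)
  finally have Eq: "emeasure lborel ?E = (\<integral>\<^sup>+x. ennreal (inverse \<bar>U\<bar>) * indicator ?B' x \<partial>lborel)" .
  have "B \<inter> {0<..<M} \<subseteq> ?B'" using UM by auto
  then have "0 < emeasure lborel ?B'"
    using BM emeasure_mono[of "B \<inter> {0<..<M}" ?B' lborel] B'm by (auto intro: less_le_trans)
  then have "0 < (\<integral>\<^sup>+x. ennreal (inverse \<bar>U\<bar>) * indicator ?B' x \<partial>lborel)"
    by (intro pos_lemma[where E="?B'"]) (use B'm U0 in auto)
  with Eq have Epos: "0 < emeasure lborel ?E" by simp
  have Em: "?E \<in> sets borel"
  proof -
    have "?E = {0<..<1} \<inter> ((\<lambda>p. p * U) -` B)" by auto
    moreover have "(\<lambda>p. p * U) -` B \<in> sets borel"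
      using measurable_sets_borel[of "\<lambda>p. p * U" borel B] B by auto
    ultimately show ?thesis by simp
  qed
  have sub: "?E \<subseteq> {0<..<1}" by auto
  show ?thesis
    by (rule pos_lemma[where E="?E"]) (use g Em Epos unif01_emeasure[OF Em sub] gpos in auto)
qed

lemma expo_tail_pos:
  assumes T: "0 < T" shows "0 < emeasure (expo T) {a<..}"
proof -
  let ?b = "max a 0"
  have "emeasure lborel {?b<..<?b+1} \<le> emeasure lborel {?b<..}" by (rule emeasure_mono) auto
  then have lb: "0 < emeasure lborel {?b<..}" by (simp add: less_le_trans[of 0 "ennreal 1"])
  have "0 < emeasure (expo T) {?b<..}"
    unfolding expo_def
  proof (subst emeasure_density)
    show "0 < (\<integral>\<^sup>+x. ennreal (exponential_density (1/T) x) * indicator {?b<..} x \<partial>lborel)"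
      by (rule pos_lemma[where E="{?b<..}"]) (use T lb in \<open>auto simp: exponential_density_def\<close>)
  qed simp_all
  also have "\<dots> \<le> emeasure (expo T) {a<..}"
    by (rule emeasure_mono) (auto simp: expo_def)
  finally show ?thesis .
qed

lemma rt_pos:
  assumes N: "0 < N" and T: "0 < TR" and G: "G \<in> borel_measurable (SS N)" and y: "y \<in> space (SS N)"
    and h: "\<And>X. Thr < X \<Longrightarrow> 0 < (\<integral>\<^sup>+p. G (right_move N p X y) \<partial>unif01)"
  shows "0 < (\<integral>\<^sup>+w. G (right_move N (fst w) (snd w) y) \<partial>(unif01 \<Otimes>\<^sub>M expo TR))"
proof -
  interpret U: prob_space unif01 by (rule prob_unif01)
  interpret E: prob_space "expo TR" by (rule prob_expo[OF T])
  interpret P: pair_sigma_finite unif01 "expo TR" by standard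
  let ?f = "\<lambda>w. G (right_move N (fst w) (snd w) y)"
  have fm: "?f \<in> borel_measurable (unif01 \<Otimes>\<^sub>M expo TR)"
    by (rule measurable_compose[OF right_meas1[OF N y] G])
  have im: "(\<lambda>X. \<integral>\<^sup>+p. ?f (p, X) \<partial>unif01) \<in> borel_measurable (expo TR)"
    using U.borel_measurable_nn_integral_fst[OF measurable_pair_swap[OF fm]] by simp
  have "0 < (\<integral>\<^sup>+X. (\<integral>\<^sup>+p. ?f (p, X) \<partial>unif01) \<partial>expo TR)"
    by (rule pos_lemma[where E="{Thr<..}"]) (use im h expo_tail_pos[OF T] in auto)
  also have "\<dots> = (\<integral>\<^sup>+w. ?f w \<partial>(unif01 \<Otimes>\<^sub>M expo TR))"
    by (rule P.nn_integral_snd[OF fm])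
  finally show ?thesis .
qed

lemma exM:
  fixes B :: "real set"
  assumes B: "B \<in> sets borel" "B \<subseteq> {0<..}" and pos: "0 < emeasure lborel B"
  shows "\<exists>M>0. 0 < emeasure lborel (B \<inter> {0<..<M})"
proof (rule ccontr)
  assume "\<not> ?thesis"
  then have z: "\<And>M. 0 < M \<Longrightarrow> emeasure lborel (B \<inter> {0<..<M}) = 0" using not_less by force
  have "B = (\<Union>n::nat. B \<inter> {0<..<real (Suc n)})"
  proof (auto)
    fix x assume x: "x \<in> B"
    then have "0 < x" using B by auto
    obtain n :: nat where "x < real n" using reals_Archimedean2 by blast
    then have "x < real (Suc n)" by simp
    then show "\<exists>n. x < 1 + real n" by auto
  next
    fix x assume "x \<in> B" then show "0 < x" using B by auto
  qed
  also have "emeasure lborel \<dots> = 0"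
    by (rule emeasure_UN_eq_0) (use z B in auto)
  finally show False using pos by simp
qed

lemma orth_iff: "z \<in> see_orthant N \<longleftrightarrow> (\<forall>i<N. 0 < z i) \<and> (\<forall>i. N \<le> i \<longrightarrow> z i = undefined)"
  by (auto simp: see_orthant_def PiE_def extensional_def Pi_def)

lemma orth_space: "z \<in> see_orthant N \<Longrightarrow> z \<in> space (SS N)"
  by (auto simp: orth_iff space_see PiE_def extensional_def)

lemma bond_orth: "z \<in> see_orthant N \<Longrightarrow> Suc i < N \<Longrightarrow> 0 < p \<Longrightarrow> p < 1 \<Longrightarrow> bond_move i p z \<in> see_orthant N"
  unfolding orth_iff bond_move_def by (auto intro!: mult_pos_pos add_pos_pos)

lemma right_orth: "z \<in> see_orthant N \<Longrightarrow> 0 < N \<Longrightarrow> 0 < p \<Longrightarrow> p < 1 \<Longrightarrow> 0 \<le> X \<Longrightarrow> right_move N p X z \<in> see_orthant N"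
  unfolding orth_iff right_move_def by (auto intro!: mult_pos_pos add_pos_nonneg)

lemma rate_pos: "0 < K \<Longrightarrow> 0 < a \<Longrightarrow> 0 < b \<Longrightarrow> 0 < ennreal (see_rate K a b) / ennreal c"
  unfolding see_rate_def by (simp add: ennreal_zero_less_divide)

lemma half_pos: "0 < emeasure unif01 {1/2<..<(1::real)}"
  by (subst unif01_emeasure) (auto simp: ennreal_inverse_positive)

fun chain :: "nat \<Rightarrow> nat \<Rightarrow> mv list" where
  "chain j 0 = []"
| "chain j (Suc d) = Bd (j + d) # chain j d"

lemma valid_chain: "j + d < N \<Longrightarrow> valid N (chain j d)"
  by (induction d) (auto simp: valid_def)

lemma chain_pos:
  assumes N: "0 < N" and K: "0 < K" and T: "0 < TR" and B: "B \<in> sets borel" and M: "0 < M"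
    and BM: "0 < emeasure lborel (B \<inter> {0<..<M})"
    and phi: "\<phi> \<in> borel_measurable (SS N)"
    and phipos: "\<And>z. z \<in> see_orthant N \<Longrightarrow> (\<forall>i<j. z i = y i) \<Longrightarrow> z j \<in> B \<Longrightarrow> 0 < \<phi> z"
  shows "j + Suc d < N \<Longrightarrow> w \<in> see_orthant N \<Longrightarrow> (\<forall>i<j. w i = y i) \<Longrightarrow> 2 ^ d * M < w (j + Suc d)
    \<Longrightarrow> 0 < Fm N K TR (chain j (Suc d)) \<phi> w"
proof (induction d arbitrary: w)
  case 0
  have jN: "Suc j < N" using 0 by simp
  have wpos: "0 < w j" "0 < w (Suc j)" using 0(2) jN by (auto simp: orth_iff)
  let ?U = "w j + w (Suc j)"
  have UM: "M < ?U" using 0(4) wpos by simp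
  have g: "(\<lambda>p. \<phi> (bond_move j p w)) \<in> borel_measurable borel"
    using measurable_compose[OF bond_meas1[OF jN orth_space[OF 0(2)]] phi] by (simp cong: measurable_cong_sets)
  have "0 < (\<integral>\<^sup>+p. \<phi> (bond_move j p w) \<partial>unif01)"
  proof (rule landing[OF UM M B BM g])
    fix p :: real assume p: "0 < p" "p < 1" "p * ?U \<in> B"
    show "0 < \<phi> (bond_move j p w)"
    proof (rule phipos)
      show "bond_move j p w \<in> see_orthant N" by (rule bond_orth[OF 0(2) jN p(1,2)])
      show "\<forall>i<j. bond_move j p w i = y i" using 0(3) by (auto simp: bond_move_def)
      show "bond_move j p w j \<in> B" using p(3) by (simp add: bond_move_def)
    qed
  qed
  moreover have "0 < ennreal (see_rate K (w j) (w (Suc j))) / ennreal (unif_const N K)"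
    by (rule rate_pos[OF K wpos])
  ultimately show ?case by (simp add: ennreal_zero_less_mult_iff)
next
  case (Suc d)
  let ?k = "j + Suc d"
  have kN: "Suc ?k < N" using Suc.prems by simp
  have wpos: "0 < w ?k" "0 < w (Suc ?k)" using Suc.prems(2) kN by (auto simp: orth_iff)
  have v: "valid N (chain j (Suc d))" by (rule valid_chain) (use kN in simp)
  have G: "Fm N K TR (chain j (Suc d)) \<phi> \<in> borel_measurable (SS N)" by (rule Fm_meas[OF N T phi v])
  have g: "(\<lambda>p. Fm N K TR (chain j (Suc d)) \<phi> (bond_move ?k p w)) \<in> borel_measurable unif01"
    by (rule measurable_compose[OF bond_meas1[OF kN orth_space[OF Suc.prems(2)]] G])
  have "0 < (\<integral>\<^sup>+p. Fm N K TR (chain j (Suc d)) \<phi> (bond_move ?k p w) \<partial>unif01)"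
  proof (rule pos_lemma[OF g _ half_pos])
    show "{1/2<..<(1::real)} \<in> sets unif01" by simp
    fix p :: real assume "p \<in> {1/2<..<1}"
    then have p: "1/2 < p" "p < 1" by auto
    show "0 < Fm N K TR (chain j (Suc d)) \<phi> (bond_move ?k p w)"
    proof (rule Suc.IH)
      show "j + Suc d < N" using kN by simp
      show "bond_move ?k p w \<in> see_orthant N" by (rule bond_orth[OF Suc.prems(2) kN]) (use p in auto)
      show "\<forall>i<j. bond_move ?k p w i = y i" using Suc.prems(3) by (auto simp: bond_move_def)
      have "2 ^ Suc d * M < w (Suc ?k)" using Suc.prems(4) by simp
      then have "2 ^ d * M < w (Suc ?k) / 2" by simp
      also have "\<dots> < p * (w ?k + w (Suc ?k))"
      proof -
        have "w (Suc ?k) / 2 < p * w (Suc ?k)" using p wpos by (simp add: field_simps)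
        also have "\<dots> < p * (w ?k + w (Suc ?k))" using p wpos by (simp add: algebra_simps)
        finally show ?thesis .
      qed
      finally show "2 ^ d * M < bond_move ?k p w (j + Suc d)" by (simp add: bond_move_def)
    qed
  qed
  moreover have "0 < ennreal (see_rate K (w ?k) (w (Suc ?k))) / ennreal (unif_const N K)"
    by (rule rate_pos[OF K wpos])
  ultimately show ?case by (simp add: ennreal_zero_less_mult_iff)
qed

lemma round_pos:
  assumes N: "0 < N" and K: "0 < K" and T: "0 < TR" and j: "j < N" and y: "y \<in> see_orthant N"
    and B: "B \<in> sets borel" "B \<subseteq> {0<..}" "0 < emeasure lborel B"
    and phi: "\<phi> \<in> borel_measurable (SS N)"
    and phipos: "\<And>z. z \<in> see_orthant N \<Longrightarrow> (\<forall>i<j. z i = y i) \<Longrightarrow> z j \<in> B \<Longrightarrow> 0 < \<phi> z"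
  shows "0 < Fm N K TR (Rt # chain j (N - 1 - j)) \<phi> y"
proof -
  obtain M where M: "0 < M" "0 < emeasure lborel (B \<inter> {0<..<M})" using exM[OF B] by blast
  have yN: "0 < y (N - 1)" using y N by (auto simp: orth_iff)
  have ys: "y \<in> space (SS N)" by (rule orth_space[OF y])
  let ?ch = "chain j (N - 1 - j)"
  have v: "valid N ?ch" by (rule valid_chain) (use j in simp)
  have G: "Fm N K TR ?ch \<phi> \<in> borel_measurable (SS N)" by (rule Fm_meas[OF N T phi v])
  have main: "0 < (\<integral>\<^sup>+w. Fm N K TR ?ch \<phi> (right_move N (fst w) (snd w) y) \<partial>(unif01 \<Otimes>\<^sub>M expo TR))"
  proof (cases "N - 1 - j")
    case 0
    then have jN: "j = N - 1" using j by simp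
    show ?thesis
    proof (rule rt_pos[OF N T G ys, where Thr=M])
      fix X assume X: "M < X"
      have UM: "M < y (N - 1) + X" using X yN by simp
      have g: "(\<lambda>p. \<phi> (right_move N p X y)) \<in> borel_measurable borel"
        using measurable_compose[OF meas_slice[OF measurable_pair_swap[OF right_meas1[OF N ys, of TR]], of X] phi]
        by (simp cong: measurable_cong_sets)
      have "0 < (\<integral>\<^sup>+p. \<phi> (right_move N p X y) \<partial>unif01)"
      proof (rule landing[OF UM M(1) B(1) M(2) g])
        fix p :: real assume p: "0 < p" "p < 1" "p * (y (N - 1) + X) \<in> B"
        show "0 < \<phi> (right_move N p X y)"
        proof (rule phipos)
          show "right_move N p X y \<in> see_orthant N" by (rule right_orth[OF y N p(1,2)]) (use X M in simp)
          show "\<forall>i<j. right_move N p X y i = y i" using jN by (auto simp: right_move_def)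
          show "right_move N p X y j \<in> B" using p(3) jN by (simp add: right_move_def)
        qed
      qed
      then show "0 < (\<integral>\<^sup>+p. Fm N K TR ?ch \<phi> (right_move N p X y) \<partial>unif01)" using 0 by simp
    qed
  next
    case (Suc d)
    then have jd: "j + Suc d = N - 1" "j + Suc d < N" using j by auto
    show ?thesis
    proof (rule rt_pos[OF N T G ys, where Thr="2 ^ Suc d * M"])
      fix X assume X: "2 ^ Suc d * M < X"
      have X0: "0 < X" using X M by (smt (verit) zero_less_power mult_pos_pos)
      have g: "(\<lambda>p. Fm N K TR ?ch \<phi> (right_move N p X y)) \<in> borel_measurable unif01"
        using measurable_compose[OF meas_slice[OF measurable_pair_swap[OF right_meas1[OF N ys, of TR]], of X] G]
        by (simp cong: measurable_cong_sets)
      show "0 < (\<integral>\<^sup>+p. Fm N K TR ?ch \<phi> (right_move N p X y) \<partial>unif01)"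
      proof (rule pos_lemma[OF g _ half_pos])
        show "{1/2<..<(1::real)} \<in> sets unif01" by simp
        fix p :: real assume "p \<in> {1/2<..<1}"
        then have p: "1/2 < p" "p < 1" by auto
        show "0 < Fm N K TR ?ch \<phi> (right_move N p X y)"
          unfolding Suc
        proof (rule chain_pos[OF N K T B(1) M(1) M(2) phi phipos jd(2)])
          show "right_move N p X y \<in> see_orthant N" by (rule right_orth[OF y N]) (use p X0 in auto)
          show "\<forall>i<j. right_move N p X y i = y i" using jd by (auto simp: right_move_def)
          have "2 ^ d * M < X / 2" using X by simp
          also have "\<dots> < p * (y (N - 1) + X)"
          proof -
            have "X / 2 < p * X" using p X0 by (simp add: field_simps)
            also have "\<dots> < p * (y (N - 1) + X)" using p yN by (simp add: algebra_simps)
            finally show ?thesis .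
          qed
          finally show "2 ^ d * M < right_move N p X y (j + Suc d)" using jd by (simp add: right_move_def)
        qed
      qed
    qed
  qed
  moreover have "0 < ennreal (see_rate K (y (N - 1)) TR) / ennreal (unif_const N K)"
    by (rule rate_pos[OF K yN T])
  ultimately show ?thesis by (simp add: ennreal_zero_less_mult_iff)
qed

interpretation PL: product_sigma_finite "\<lambda>_::nat. lborel"
  by (simp add: product_sigma_finite_def lborel.sigma_finite_measure_axioms)

definition comb :: "nat \<Rightarrow> (nat \<Rightarrow> real) \<Rightarrow> (nat \<Rightarrow> real) \<Rightarrow> (nat \<Rightarrow> real)" where
  "comb j y t = (\<lambda>i. if i < j then y i else t i)"

definition V :: "nat \<Rightarrow> (nat \<Rightarrow> real) set \<Rightarrow> nat \<Rightarrow> (nat \<Rightarrow> real) \<Rightarrow> ennreal" where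
  "V N A j y = (\<integral>\<^sup>+t. indicator A (comb j y t) \<partial>(PiM {j..<N} (\<lambda>_. lborel)))"

lemma comb_meas:
  assumes "j \<le> N"
  shows "comb j y \<in> measurable (PiM {j..<N} (\<lambda>_. lborel)) (SS N)"
proof (rule meas_into_S)
  fix k assume k: "k < N"
  show "(\<lambda>t. comb j y t k) \<in> borel_measurable (PiM {j..<N} (\<lambda>_. lborel))"
  proof (cases "k < j")
    case True then show ?thesis by (simp add: comb_def)
  next
    case False
    then have "k \<in> {j..<N}" using k by simp
    then have "(\<lambda>t. t k) \<in> measurable (PiM {j..<N} (\<lambda>_. lborel)) lborel"
      by (rule measurable_component_singleton)
    then show ?thesis using False by (simp add: comb_def)
  qed
next
  fix t k assume "t \<in> space (PiM {j..<N} (\<lambda>_. lborel :: real measure))" "N \<le> k"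
  then show "comb j y t k = undefined" using assms by (auto simp: comb_def space_PiM PiE_def extensional_def)
qed

lemma V0: "A \<in> sets (SS N) \<Longrightarrow> V N A 0 y = emeasure (SS N) A"
proof -
  assume A: "A \<in> sets (SS N)"
  have "V N A 0 y = (\<integral>\<^sup>+t. indicator A t \<partial>(SS N))"
    unfolding V_def see_space_def by (simp add: comb_def atLeast0LessThan)
  also have "\<dots> = emeasure (SS N) A" using A by simp
  finally show ?thesis .
qed

lemma VN: "y \<in> see_orthant N \<Longrightarrow> V N A N y = indicator A y"
proof -
  assume y: "y \<in> see_orthant N"
  have "V N A N y = indicator A (comb N y (\<lambda>_. undefined))"
    unfolding V_def by (simp add: PL.nn_integral_empty)
  also have "comb N y (\<lambda>_. undefined) = y" using y by (auto simp: comb_def orth_iff fun_eq_iff)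
  finally show ?thesis .
qed

lemma Vstep:
  assumes j: "j < N" and A: "A \<in> sets (SS N)"
  shows "V N A j y = (\<integral>\<^sup>+s. V N A (Suc j) (y(j := s)) \<partial>lborel)"
proof -
  have ins: "{j..<N} = insert j {Suc j..<N}" using j by auto
  have f: "(\<lambda>t. indicator A (comb j y t) :: ennreal) \<in> borel_measurable (PiM (insert j {Suc j..<N}) (\<lambda>_. lborel))"
    using measurable_compose[OF comb_meas[of j N y] borel_measurable_indicator[OF A]] j ins by simp
  have "V N A j y = (\<integral>\<^sup>+s. (\<integral>\<^sup>+t. indicator A (comb j y (t(j := s))) \<partial>PiM {Suc j..<N} (\<lambda>_. lborel)) \<partial>lborel)"
    unfolding V_def ins by (rule PL.product_nn_integral_insert_rev[OF _ _ f]) auto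
  also have "\<dots> = (\<integral>\<^sup>+s. V N A (Suc j) (y(j := s)) \<partial>lborel)"
  proof -
    have "comb j y (t(j := s)) = comb (Suc j) (y(j := s)) t" for t s
      by (auto simp: comb_def fun_eq_iff)
    then show ?thesis by (simp add: V_def)
  qed
  finally show ?thesis .
qed

lemma Vmeas:
  assumes j: "j < N" and A: "A \<in> sets (SS N)"
  shows "(\<lambda>s. V N A (Suc j) (y(j := s))) \<in> borel_measurable borel"
proof -
  let ?P = "PiM {Suc j..<N} (\<lambda>_. lborel :: real measure)"
  interpret FP: finite_product_sigma_finite "\<lambda>_. lborel :: real measure" "{Suc j..<N}" by standard simp
  have cm: "(\<lambda>w. comb (Suc j) (y(j := fst w)) (snd w)) \<in> measurable (borel \<Otimes>\<^sub>M ?P) (SS N)"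
  proof (rule meas_into_S)
    fix k assume k: "k < N"
    show "(\<lambda>w. comb (Suc j) (y(j := fst w)) (snd w) k) \<in> borel_measurable (borel \<Otimes>\<^sub>M ?P)"
    proof (cases "k < Suc j")
      case True
      then show ?thesis
      proof (cases "k = j")
        case True then show ?thesis by (simp add: comb_def)
      next
        case False then show ?thesis using \<open>k < Suc j\<close> by (simp add: comb_def)
      qed
    next
      case False
      then have "k \<in> {Suc j..<N}" using k by simp
      then have "(\<lambda>t. t k) \<in> measurable ?P lborel"
        by (rule measurable_component_singleton)
      then have "(\<lambda>w. snd w k) \<in> borel_measurable (borel \<Otimes>\<^sub>M ?P)"
        using measurable_compose[OF measurable_snd] by fastforce
      then show ?thesis using False by (simp add: comb_def)
    qed
  next
    fix w :: "real \<times> (nat \<Rightarrow> real)" and k assume "w \<in> space (borel \<Otimes>\<^sub>M ?P)" "N \<le> k"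
    then show "comb (Suc j) (y(j := fst w)) (snd w) k = undefined"
      using j by (auto simp: comb_def space_pair_measure space_PiM PiE_def extensional_def)
  qed
  have "case_prod (\<lambda>s t. indicator A (comb (Suc j) (y(j := s)) t) :: ennreal) \<in> borel_measurable (borel \<Otimes>\<^sub>M ?P)"
    using measurable_compose[OF cm borel_measurable_indicator[OF A]] by (simp add: case_prod_beta')
  then have "(\<lambda>s. \<integral>\<^sup>+t. indicator A (comb (Suc j) (y(j := s)) t) \<partial>?P) \<in> borel_measurable borel"
    by (rule FP.borel_measurable_nn_integral)
  then show ?thesis by (simp add: V_def)
qed

lemma Vpos_coord:
  assumes A: "A \<subseteq> see_orthant N" and j: "j < N" and pos: "0 < V N A (Suc j) (y(j := s))"
  shows "0 < s"
proof (rule ccontr)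
  assume s: "\<not> 0 < s"
  have "\<And>t. indicator A (comb (Suc j) (y(j := s)) t) = (0::ennreal)"
  proof -
    fix t
    have "comb (Suc j) (y(j := s)) t \<notin> A"
    proof
      assume "comb (Suc j) (y(j := s)) t \<in> A"
      then have "comb (Suc j) (y(j := s)) t \<in> see_orthant N" using A by auto
      then have "0 < comb (Suc j) (y(j := s)) t j" using j by (simp add: orth_iff)
      then show False using s by (simp add: comb_def)
    qed
    then show "indicator A (comb (Suc j) (y(j := s)) t) = (0::ennreal)" by simp
  qed
  then have "V N A (Suc j) (y(j := s)) = 0" by (simp add: V_def)
  with pos show False by simp
qed

lemma V_dep:
  assumes "\<forall>i<j. z i = y i"
  shows "V N A (Suc j) z = V N A (Suc j) (y(j := z j))"
proof -
  have "comb (Suc j) z t = comb (Suc j) (y(j := z j)) t" for t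
    using assms by (auto simp: comb_def fun_eq_iff less_Suc_eq)
  then show ?thesis by (simp add: V_def)
qed

fun rounds :: "nat \<Rightarrow> nat \<Rightarrow> mv list" where
  "rounds N 0 = []"
| "rounds N (Suc d) = (Rt # chain (N - Suc d) (N - 1 - (N - Suc d))) @ rounds N d"

lemma Fm_append: "Fm N K TR (ms1 @ ms2) \<phi> x = Fm N K TR ms1 (Fm N K TR ms2 \<phi>) x"
proof (induction ms1 arbitrary: x)
  case Nil then show ?case by simp
next
  case (Cons m ms) then show ?case by (cases m) simp_all
qed

lemma valid_append: "valid N (ms1 @ ms2) \<longleftrightarrow> valid N ms1 \<and> valid N ms2"
  by (auto simp: valid_def)

lemma valid_rounds: "d \<le> N \<Longrightarrow> valid N (rounds N d)"
proof (induction d)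
  case 0 then show ?case by (simp add: valid_def)
next
  case (Suc d)
  have "valid N (chain (N - Suc d) (N - 1 - (N - Suc d)))" by (rule valid_chain) (use Suc.prems in simp)
  then show ?case using Suc by (simp add: valid_append valid_def)
qed

lemma main_ind:
  assumes N: "0 < N" and K: "0 < K" and T: "0 < TR" and A: "A \<in> sets (SS N)" "A \<subseteq> see_orthant N"
  shows "d \<le> N \<Longrightarrow> y \<in> see_orthant N \<Longrightarrow> 0 < V N A (N - d) y \<Longrightarrow> 0 < Fm N K TR (rounds N d) (indicator A) y"
proof (induction d arbitrary: y)
  case 0 then show ?case using VN[OF "0.prems"(2)] by simp
next
  case (Suc d)
  define j where "j = N - Suc d"
  have j: "j < N" "Suc j = N - d" using Suc.prems(1) N by (auto simp: j_def)
  define h where "h s = V N A (Suc j) (y(j := s))" for s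
  have hm: "h \<in> borel_measurable borel" unfolding h_def by (rule Vmeas[OF j(1) A(1)])
  have Vj: "V N A j y = (\<integral>\<^sup>+s. h s \<partial>lborel)" unfolding h_def by (rule Vstep[OF j(1) A(1)])
  define B where "B = {s. 0 < h s}"
  have Bm: "B \<in> sets borel"
  proof -
    have "B = h -` {0<..} \<inter> space borel" by (auto simp: B_def)
    then show ?thesis using measurable_sets_borel[OF hm, of "{0<..}"] by simp
  qed
  have Bpos: "0 < emeasure lborel B"
  proof (rule ccontr)
    assume "\<not> 0 < emeasure lborel B"
    then have "emeasure lborel {s\<in>space lborel. h s \<noteq> 0} = 0" by (simp add: B_def zero_less_iff_neq_zero)
    then have "(\<integral>\<^sup>+s. h s \<partial>lborel) = 0" using nn_integral_0_iff[of h lborel] hm by simp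
    then show False using Suc.prems(3) Vj j_def by simp
  qed
  have Bsub: "B \<subseteq> {0<..}"
    using Vpos_coord[OF A(2) j(1)] by (auto simp: B_def h_def)
  have v: "valid N (rounds N d)" by (rule valid_rounds) (use Suc.prems in simp)
  have phi: "Fm N K TR (rounds N d) (indicator A) \<in> borel_measurable (SS N)"
    by (rule Fm_meas[OF N T _ v]) (use A in simp)
  have "0 < Fm N K TR (Rt # chain j (N - 1 - j)) (Fm N K TR (rounds N d) (indicator A)) y"
  proof (rule round_pos[OF N K T j(1) Suc.prems(2) Bm Bsub Bpos phi])
    fix z assume z: "z \<in> see_orthant N" "\<forall>i<j. z i = y i" "z j \<in> B"
    have "V N A (Suc j) z = h (z j)" unfolding h_def by (rule V_dep[OF z(2)])
    then have "0 < V N A (N - d) z" using z(3) j(2) by (simp add: B_def)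
    then show "0 < Fm N K TR (rounds N d) (indicator A) z"
      using Suc.IH[of z] Suc.prems(1) z(1) by simp
  qed
  then show ?case by (simp add: Fm_append j_def)
qed

theorem corollary6p3:
  fixes N :: nat and TL TR :: real
  assumes "N \<ge> 1" and "TL > 0" and "TR > 0"
  shows "\<exists>K0. \<forall>K \<ge> K0. \<forall>h > 0. \<forall>E0 A.
           E0 \<in> see_orthant N \<longrightarrow> A \<in> sets (see_space N) \<longrightarrow> A \<subseteq> see_orthant N \<longrightarrow>
           emeasure (see_space N) A > 0 \<longrightarrow>
           (\<exists>n \<ge> 1. see_kernel N K TL TR (real n * h) E0 A > 0)"
proof (intro exI[of _ "1::real"] allI impI)
  fix K h :: real and E0 A
  assume K1: "1 \<le> K" and h: "0 < h" and E0: "E0 \<in> see_orthant N" and A: "A \<in> sets (see_space N)"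
    and Asub: "A \<subseteq> see_orthant N" and Apos: "0 < emeasure (see_space N) A"
  have N: "0 < N" using assms(1) by simp
  have K: "0 < K" using K1 by simp
  have T: "0 < TR" using assms(3) .
  let ?ms = "rounds N N"
  have "0 < V N A (N - N) E0" using V0[OF A] Apos by simp
  then have Fpos: "0 < Fm N K TR ?ms (indicator A) E0"
    by (rule main_ind[OF N K T A Asub order_refl E0])
  have "Fm N K TR ?ms (indicator A) E0 \<le> unif_iter N K TL TR (length ?ms) E0 A"
    by (rule iter_ge_Fm[OF N T A valid_rounds[OF order_refl] orth_space[OF E0]])
  with Fpos have Ipos: "0 < unif_iter N K TL TR (length ?ms) E0 A" by (rule less_le_trans)
  let ?L = "unif_const N K"
  let ?f = "\<lambda>k. ennreal (exp (- ?L * (real 1 * h)) * (?L * (real 1 * h)) ^ k / fact k) * unif_iter N K TL TR k E0 A"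
  have L: "0 < ?L" using K by (simp add: unif_const_def)
  have c: "0 < ennreal (exp (- ?L * (real 1 * h)) * (?L * (real 1 * h)) ^ (length ?ms) / fact (length ?ms))"
    using L h by simp
  have "?f (length ?ms) \<le> suminf ?f"
    using sum_le_suminf[OF summableI, of "{length ?ms}" ?f] by simp
  moreover have "0 < ?f (length ?ms)" using c Ipos by (simp add: ennreal_zero_less_mult_iff)
  ultimately have "0 < see_kernel N K TL TR (real 1 * h) E0 A"
    unfolding see_kernel_def by (rule less_le_trans[rotated])
  then show "\<exists>n \<ge> 1. see_kernel N K TL TR (real n * h) E0 A > 0" by (intro exI[of _ 1]) simp
qed

end
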